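(* Let $n\ge 2k\ge 2$ and $i\in\{0,1,\ldots,k-1\}$. If the generalized Johnson graph $J(n,k,i)$ admits perfect state transfer, then $n=2k$.
   Context: For integers $n\ge 2k$ and $0\le i\le k$, $J(n,k,i)$ is the graph whose vertices are the $k$-subsets of $\{1,\ldots,n\}$, with $A\sim B$ iff $|A\cap B|=i$. For a simple graph $X$ with adjacency matrix $A$, let $\mathcal{H}_X(t)=e^{itA}$. $X$ admits perfect state transfer (PST) from a vertex $u$ to a vertex $v\neq u$ at time $\tau>0$ if $|\mathcal{H}_X(\tau)_{u,v}|=1$; $X$ admits PST if this happens for some $u\ne v$ and some $\tau>0$. *)

theory Defs
  imports Complex_Main
begin

definition adjacency_matrix :: "('a \<Rightarrow> 'a \<Rightarrow> bool) \<Rightarrow> 'a \<Rightarrow> 'a \<Rightarrow> complex" where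
  "adjacency_matrix E u v = (if E u v then 1 else 0)"

fun mat_pow :: "'a set \<Rightarrow> ('a \<Rightarrow> 'a \<Rightarrow> complex) \<Rightarrow> nat \<Rightarrow> 'a \<Rightarrow> 'a \<Rightarrow> complex" where
  "mat_pow V M 0 u v = (if u = v then 1 else 0)"
| "mat_pow V M (Suc m) u v = (\<Sum>w\<in>V. M u w * mat_pow V M m w v)"

text \<open>The transition matrix H_X(t) = exp(i t A), via the exponential power series.\<close>
definition transition_matrix :: "'a set \<Rightarrow> ('a \<Rightarrow> 'a \<Rightarrow> bool) \<Rightarrow> real \<Rightarrow> 'a \<Rightarrow> 'a \<Rightarrow> complex" where
  "transition_matrix V E t u v =
     (\<Sum>m. (\<i> * complex_of_real t) ^ m / fact m * mat_pow V (adjacency_matrix E) m u v)"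

definition has_PST :: "'a set \<Rightarrow> ('a \<Rightarrow> 'a \<Rightarrow> bool) \<Rightarrow> bool" where
  "has_PST V E \<longleftrightarrow>
     (\<exists>u\<in>V. \<exists>v\<in>V. u \<noteq> v \<and> (\<exists>\<tau>::real. \<tau> > 0 \<and> cmod (transition_matrix V E \<tau> u v) = 1))"

definition johnson_vertices :: "nat \<Rightarrow> nat \<Rightarrow> nat set set" where
  "johnson_vertices n k = {A. A \<subseteq> {1..n} \<and> card A = k}"

definition johnson_adj :: "nat \<Rightarrow> nat \<Rightarrow> nat \<Rightarrow> nat set \<Rightarrow> nat set \<Rightarrow> bool" where
  "johnson_adj n k i A B \<longleftrightarrow>
     A \<in> johnson_vertices n k \<and> B \<in> johnson_vertices n k \<and> A \<noteq> B \<and> card (A \<inter> B) = i"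

end

theory Submission
  imports Defs
begin

lemma sum_delta_mult:
  fixes f :: "'a \<Rightarrow> complex"
  assumes "finite V" "u \<in> V"
  shows "(\<Sum>w\<in>V. (if u = w then 1 else 0) * f w) = f u"
    "(\<Sum>w\<in>V. f w * (if w = u then 1 else 0)) = f u"
proof -
  have "(\<Sum>w\<in>V. (if u = w then 1 else 0) * f w) = (\<Sum>w\<in>V. if w = u then f w else 0)"
    by (intro sum.cong) auto
  then show "(\<Sum>w\<in>V. (if u = w then 1 else 0) * f w) = f u" using assms by simp
  have "(\<Sum>w\<in>V. f w * (if w = u then 1 else 0)) = (\<Sum>w\<in>V. if w = u then f w else 0)"
    by (intro sum.cong) auto
  then show "(\<Sum>w\<in>V. f w * (if w = u then 1 else 0)) = f u" using assms by simp
qed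

lemma mat_pow_add:
  assumes "finite V" "u \<in> V"
  shows "mat_pow V M (a + b) u v = (\<Sum>w\<in>V. mat_pow V M a u w * mat_pow V M b w v)"
  using assms(2)
proof (induction a arbitrary: u)
  case 0
  then show ?case using sum_delta_mult(1)[OF assms(1) 0] by simp
next
  case (Suc a)
  have "mat_pow V M (Suc a + b) u v = (\<Sum>x\<in>V. M u x * mat_pow V M (a + b) x v)" by simp
  also have "\<dots> = (\<Sum>x\<in>V. M u x * (\<Sum>w\<in>V. mat_pow V M a x w * mat_pow V M b w v))"
    using Suc.IH by (intro sum.cong) auto
  also have "\<dots> = (\<Sum>x\<in>V. \<Sum>w\<in>V. M u x * mat_pow V M a x w * mat_pow V M b w v)"
    by (simp add: sum_distrib_left mult.assoc)
  also have "\<dots> = (\<Sum>w\<in>V. \<Sum>x\<in>V. M u x * mat_pow V M a x w * mat_pow V M b w v)"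
    by (rule sum.swap)
  also have "\<dots> = (\<Sum>w\<in>V. mat_pow V M (Suc a) u w * mat_pow V M b w v)"
    by (simp add: sum_distrib_right)
  finally show ?case .
qed

lemma mat_pow_one:
  assumes "finite V" "v \<in> V"
  shows "mat_pow V M 1 u v = M u v"
  using sum_delta_mult(2)[OF assms] by simp

lemma mat_pow_sym:
  assumes "finite V" "\<forall>x\<in>V. \<forall>y\<in>V. M x y = M y x"
  shows "u \<in> V \<Longrightarrow> v \<in> V \<Longrightarrow> mat_pow V M m u v = mat_pow V M m v u"
proof (induction m arbitrary: u v)
  case 0
  then show ?case by auto
next
  case (Suc m)
  have "mat_pow V M (Suc m) v u = mat_pow V M (m + 1) v u" by simp
  also have "\<dots> = (\<Sum>w\<in>V. mat_pow V M m v w * mat_pow V M 1 w u)"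
    using mat_pow_add[OF assms(1) Suc.prems(2)] by blast
  also have "\<dots> = (\<Sum>w\<in>V. M u w * mat_pow V M m w v)"
    using Suc assms mat_pow_one[OF assms(1) Suc.prems(1)]
    by (intro sum.cong) (auto simp: mult.commute)
  finally show ?case by simp
qed

lemma mat_pow_cnj:
  assumes "\<forall>x y. cnj (M x y) = M x y"
  shows "cnj (mat_pow V M m u v) = mat_pow V M m u v"
  by (induction m arbitrary: u v) (auto simp: assms)

lemma mat_pow_bound:
  assumes "\<forall>x y. norm (M x y) \<le> 1"
  shows "norm (mat_pow V M m u v) \<le> real (card V) ^ m"
proof (induction m arbitrary: u v)
  case 0
  then show ?case by auto
next
  case (Suc m)
  have "norm (mat_pow V M (Suc m) u v) \<le> (\<Sum>w\<in>V. norm (M u w * mat_pow V M m w v))"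
    by (simp add: sum_norm_le)
  also have "\<dots> \<le> of_nat (card V) * real (card V) ^ m"
  proof (rule sum_bounded_above)
    fix w
    have "norm (M u w * mat_pow V M m w v) = norm (M u w) * norm (mat_pow V M m w v)"
      by (simp add: norm_mult)
    also have "\<dots> \<le> 1 * real (card V) ^ m"
      using assms Suc.IH by (intro mult_mono) auto
    finally show "norm (M u w * mat_pow V M m w v) \<le> real (card V) ^ m" by simp
  qed
  finally show ?case by simp
qed

lemma mat_pow_inv:
  assumes "bij_betw \<sigma> V V" "\<forall>x\<in>V. \<forall>y\<in>V. M (\<sigma> x) (\<sigma> y) = M x y"
  shows "u \<in> V \<Longrightarrow> v \<in> V \<Longrightarrow> mat_pow V M m (\<sigma> u) (\<sigma> v) = mat_pow V M m u v"
proof (induction m arbitrary: u v)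
  case 0
  then show ?case using assms(1) by (auto simp: bij_betw_def inj_on_def)
next
  case (Suc m)
  have "mat_pow V M (Suc m) (\<sigma> u) (\<sigma> v) = (\<Sum>w\<in>V. M (\<sigma> u) w * mat_pow V M m w (\<sigma> v))" by simp
  also have "\<dots> = (\<Sum>w\<in>V. M (\<sigma> u) (\<sigma> w) * mat_pow V M m (\<sigma> w) (\<sigma> v))"
    using sum.reindex_bij_betw[OF assms(1), of "\<lambda>w. M (\<sigma> u) w * mat_pow V M m w (\<sigma> v)"] by simp
  also have "\<dots> = (\<Sum>w\<in>V. M u w * mat_pow V M m w v)"
    using Suc assms(2) by (intro sum.cong) auto
  finally show ?case by simp
qed

definition tterm :: "'a set \<Rightarrow> ('a \<Rightarrow> 'a \<Rightarrow> complex) \<Rightarrow> real \<Rightarrow> 'a \<Rightarrow> 'a \<Rightarrow> nat \<Rightarrow> complex" where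
  "tterm V M t u v m = (\<i> * complex_of_real t) ^ m / fact m * mat_pow V M m u v"

lemma scaleR_fact_complex: "(x::complex) ^ n /\<^sub>R fact n = x ^ n / fact n"
  by (simp add: scaleR_conv_of_real field_simps)

lemma tterm_summable_norm:
  assumes "\<forall>x y. norm (M x y) \<le> 1"
  shows "summable (\<lambda>m. norm (tterm V M t u v m))"
proof (rule summable_comparison_test)
  show "summable (\<lambda>m. inverse (fact m) * (\<bar>t\<bar> * real (card V)) ^ m)"
    by (rule summable_exp)
  show "\<exists>N. \<forall>m\<ge>N. norm (norm (tterm V M t u v m)) \<le> inverse (fact m) * (\<bar>t\<bar> * real (card V)) ^ m"
  proof (intro exI allI impI)
    fix m :: nat
    have "norm (norm (tterm V M t u v m)) = \<bar>t\<bar> ^ m / fact m * norm (mat_pow V M m u v)"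
      by (simp add: tterm_def norm_mult norm_divide norm_power)
    also have "\<dots> \<le> \<bar>t\<bar> ^ m / fact m * real (card V) ^ m"
      by (intro mult_left_mono mat_pow_bound assms) auto
    also have "\<dots> = inverse (fact m) * (\<bar>t\<bar> * real (card V)) ^ m"
      by (simp add: power_mult_distrib field_simps)
    finally show "norm (norm (tterm V M t u v m)) \<le> inverse (fact m) * (\<bar>t\<bar> * real (card V)) ^ m" .
  qed
qed

lemma tterm_sums:
  assumes "\<forall>x y. norm (M x y) \<le> 1"
  shows "tterm V M t u v sums (\<Sum>m. (\<i> * complex_of_real t) ^ m / fact m * mat_pow V M m u v)"
proof -
  have "summable (tterm V M t u v)"
    using tterm_summable_norm[OF assms] summable_norm_cancel by blast
  then show ?thesis unfolding tterm_def[abs_def] by (simp add: summable_sums)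
qed


lemma row_unit:
  assumes fin: "finite V" and uV: "u \<in> V"
    and sym: "\<forall>x\<in>V. \<forall>y\<in>V. M x y = M y x"
    and re: "\<forall>x y. cnj (M x y) = M x y"
    and bd: "\<forall>x y. norm (M x y) \<le> 1"
  shows "(\<Sum>w\<in>V. (\<Sum>m. tterm V M t u w m) * cnj (\<Sum>m. tterm V M t u w m)) = 1"
proof -
  define H where "H = (\<lambda>t u v. (\<Sum>m. tterm V M t u v m))"
  have Hs: "tterm V M t u v sums H t u v" for t u v
    unfolding H_def using tterm_summable_norm[OF bd] summable_norm_cancel summable_sums by blast
  have cj: "cnj (H t u w) = H (-t) w u" if "w \<in> V" for w
  proof -
    have "(\<lambda>m. cnj (tterm V M t u w m)) sums cnj (H t u w)"
      using Hs sums_cnj by blast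
    moreover have "cnj (tterm V M t u w m) = tterm V M (-t) w u m" for m
      using mat_pow_cnj[OF re] mat_pow_sym[OF fin sym uV that]
      by (simp add: tterm_def)
    ultimately have "tterm V M (-t) w u sums cnj (H t u w)" by simp
    then show ?thesis using Hs sums_unique2 by blast
  qed
  define x where "x = \<i> * complex_of_real t"
  define y where "y = \<i> * complex_of_real (-t)"
  have xy: "x + y = 0" unfolding x_def y_def by simp
  have prod: "(\<lambda>k. \<Sum>i\<le>k. tterm V M t u w i * tterm V M (-t) w u (k - i)) sums (H t u w * H (-t) w u)"
    for w unfolding H_def
    by (intro Cauchy_product_sums tterm_summable_norm bd)
  have "(\<lambda>k. \<Sum>w\<in>V. \<Sum>i\<le>k. tterm V M t u w i * tterm V M (-t) w u (k - i))
          sums (\<Sum>w\<in>V. H t u w * H (-t) w u)"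
    by (rule sums_sum) (rule prod)
  moreover have "(\<Sum>w\<in>V. \<Sum>i\<le>k. tterm V M t u w i * tterm V M (-t) w u (k - i))
      = (if k = 0 then 1 else 0)" for k
  proof -
    have "(\<Sum>w\<in>V. \<Sum>i\<le>k. tterm V M t u w i * tterm V M (-t) w u (k - i))
        = (\<Sum>i\<le>k. \<Sum>w\<in>V. (x ^ i / fact i * (y ^ (k - i) / fact (k - i))) *
              (mat_pow V M i u w * mat_pow V M (k - i) w u))"
      by (subst sum.swap) (simp add: tterm_def x_def y_def mult_ac)
    also have "\<dots> = (\<Sum>i\<le>k. (x ^ i / fact i * (y ^ (k - i) / fact (k - i))) * mat_pow V M k u u)"
    proof (intro sum.cong refl)
      fix i assume "i \<in> {..k}"
      then have "mat_pow V M k u u = mat_pow V M (i + (k - i)) u u" by simp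
      also have "\<dots> = (\<Sum>w\<in>V. mat_pow V M i u w * mat_pow V M (k - i) w u)"
        by (rule mat_pow_add[OF fin uV])
      finally show "(\<Sum>w\<in>V. (x ^ i / fact i * (y ^ (k - i) / fact (k - i))) *
              (mat_pow V M i u w * mat_pow V M (k - i) w u)) =
            (x ^ i / fact i * (y ^ (k - i) / fact (k - i))) * mat_pow V M k u u"
        by (simp add: sum_distrib_left)
    qed
    also have "\<dots> = (\<Sum>i\<le>k. (x ^ i /\<^sub>R fact i) * (y ^ (k - i) /\<^sub>R fact (k - i))) * mat_pow V M k u u"
      by (simp only: sum_distrib_right scaleR_fact_complex)
    also have "\<dots> = (x + y) ^ k /\<^sub>R fact k * mat_pow V M k u u"
      using exp_series_add_commuting[of x y k] by (simp add: mult.commute)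
    also have "\<dots> = (if k = 0 then 1 else 0)"
      using xy by simp
    finally show ?thesis .
  qed
  ultimately have "(\<lambda>k. if k = 0 then 1 else 0) sums (\<Sum>w\<in>V. H t u w * H (-t) w u)"
    by simp
  moreover have "(\<lambda>k::nat. if k = 0 then (1::complex) else 0) sums 1"
    using sums_single[of 0 "\<lambda>_. 1::complex"] by simp
  ultimately have "(\<Sum>w\<in>V. H t u w * H (-t) w u) = 1" using sums_unique2 by blast
  moreover have "(\<Sum>w\<in>V. H t u w * cnj (H t u w)) = (\<Sum>w\<in>V. H t u w * H (-t) w u)"
    using cj by (intro sum.cong) auto
  ultimately show ?thesis unfolding H_def by simp
qed


lemma no_pst_orbit:
  assumes fin: "finite V" and uV: "u \<in> V" and vV: "v \<in> V" and wV: "w \<in> V" and vw: "v \<noteq> w"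
    and sym: "\<forall>x\<in>V. \<forall>y\<in>V. M x y = M y x"
    and re: "\<forall>x y. cnj (M x y) = M x y"
    and bd: "\<forall>x y. norm (M x y) \<le> 1"
    and bij: "bij_betw \<sigma> V V" and inv: "\<forall>x\<in>V. \<forall>y\<in>V. M (\<sigma> x) (\<sigma> y) = M x y"
    and su: "\<sigma> u = u" and sv: "\<sigma> v = w"
  shows "cmod (\<Sum>m. tterm V M t u v m) \<noteq> 1"
proof
  assume one: "cmod (\<Sum>m. tterm V M t u v m) = 1"
  define h where "h x = (\<Sum>m. tterm V M t u x m)" for x
  have "tterm V M t u w m = tterm V M t u v m" for m
    using mat_pow_inv[OF bij inv uV vV, of m] su sv by (simp add: tterm_def)
  then have "tterm V M t u w = tterm V M t u v" by (rule ext)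
  then have hw: "h w = h v" unfolding h_def by simp
  have "(\<Sum>x\<in>V. h x * cnj (h x)) = 1"
    unfolding h_def by (rule row_unit[OF fin uV sym re bd])
  then have "(\<Sum>x\<in>V. complex_of_real ((cmod (h x))\<^sup>2)) = 1"
    by (simp only: complex_norm_square)
  then have s1: "(\<Sum>x\<in>V. (cmod (h x))\<^sup>2) = 1"
    by (metis of_real_eq_1_iff of_real_sum)
  have "(\<Sum>x\<in>{v, w}. (cmod (h x))\<^sup>2) \<le> (\<Sum>x\<in>V. (cmod (h x))\<^sup>2)"
    using vV wV fin by (intro sum_mono2) auto
  moreover have "(\<Sum>x\<in>{v, w}. (cmod (h x))\<^sup>2) = 2"
    using vw hw one unfolding h_def by simp
  ultimately show False using s1 by simp
qed


theorem mainTheorem2: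
  fixes n k i :: nat
  assumes "1 \<le> k" and "2 * k \<le> n" and "i < k"
    and "has_PST (johnson_vertices n k) (johnson_adj n k i)"
  shows "n = 2 * k"
proof (rule ccontr)
  assume ne: "n \<noteq> 2 * k"
  with assms(2) have nk: "2 * k < n" by simp
  define V where "V = johnson_vertices n k"
  define E where "E = johnson_adj n k i"
  define M where "M = adjacency_matrix E"
  obtain A B \<tau> where AV: "A \<in> V" and BV: "B \<in> V" and AB: "A \<noteq> B"
    and pst: "cmod (transition_matrix V E \<tau> A B) = 1"
    using assms(4) unfolding has_PST_def V_def E_def by blast
  have tm: "transition_matrix V E \<tau> A B = (\<Sum>m. tterm V M \<tau> A B m)"
    by (simp add: transition_matrix_def tterm_def M_def)
  have finV: "finite V" unfolding V_def johnson_vertices_def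
    by (rule finite_subset[of _ "Pow {1..n}"]) auto
  have A1: "A \<subseteq> {1..n}" "card A = k" and B1: "B \<subseteq> {1..n}" "card B = k"
    using AV BV by (auto simp: V_def johnson_vertices_def)
  have finA: "finite A" and finB: "finite B"
    using A1 B1 finite_subset by blast+
  obtain b where bB: "b \<in> B" and bA: "b \<notin> A"
  proof -
    have "\<not> B \<subseteq> A"
    proof
      assume "B \<subseteq> A"
      then have "B = A" using card_subset_eq[OF finA] A1 B1 by simp
      then show False using AB by simp
    qed
    then show ?thesis using that by blast
  qed
  obtain c where c1: "c \<in> {1..n}" and cA: "c \<notin> A" and cB: "c \<notin> B"
  proof -
    have "card (A \<union> B) \<le> 2 * k" using card_Un_le[of A B] A1 B1 by simp
    then have "\<not> {1..n} \<subseteq> A \<union> B"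
      using card_mono[OF finite_UnI[OF finA finB], of "{1..n}"] nk by auto
    then show ?thesis using that by blast
  qed
  have bc: "b \<noteq> c" using bB cB by blast
  have b1: "b \<in> {1..n}" using bB B1 by blast
  define p where "p x = (if x = b then c else if x = c then b else x)" for x
  have pp: "p (p x) = x" for x unfolding p_def using bc by auto
  have injp: "inj p" by (metis injI pp)
  define \<sigma> where "\<sigma> X = p ` X" for X
  have ss: "\<sigma> (\<sigma> X) = X" for X unfolding \<sigma>_def by (simp add: image_image pp)
  have sV: "\<sigma> X \<in> V" if "X \<in> V" for X
  proof -
    have "X \<subseteq> {1..n}" "card X = k" using that by (auto simp: V_def johnson_vertices_def)
    moreover have "p ` X \<subseteq> {1..n}" using \<open>X \<subseteq> {1..n}\<close> b1 c1 by (auto simp: p_def)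
    moreover have "card (p ` X) = card X" using injp by (simp add: card_image inj_on_subset)
    ultimately show ?thesis by (simp add: V_def johnson_vertices_def \<sigma>_def)
  qed
  have bij: "bij_betw \<sigma> V V"
    by (rule bij_betw_byWitness[where f'=\<sigma>]) (auto simp: ss sV)
  have Einv: "E (\<sigma> X) (\<sigma> Y) = E X Y" if "X \<in> V" "Y \<in> V" for X Y
  proof -
    have "(\<sigma> X = \<sigma> Y) = (X = Y)" unfolding \<sigma>_def using injp by (simp add: inj_image_eq_iff)
    moreover have "card (\<sigma> X \<inter> \<sigma> Y) = card (X \<inter> Y)"
      unfolding \<sigma>_def using injp by (simp add: image_Int[symmetric] card_image inj_on_subset)
    ultimately show ?thesis using that sV unfolding E_def johnson_adj_def V_def by auto
  qed
  have sA: "\<sigma> A = A"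
  proof -
    have "\<forall>x\<in>A. p x = x" using bA cA unfolding p_def by auto
    then show ?thesis unfolding \<sigma>_def by simp
  qed
  have sB: "\<sigma> B \<noteq> B"
  proof
    assume "\<sigma> B = B"
    moreover have "c \<in> \<sigma> B" unfolding \<sigma>_def using bB by (auto simp: p_def)
    ultimately show False using cB by simp
  qed
  have sym: "\<forall>x\<in>V. \<forall>y\<in>V. M x y = M y x"
    unfolding M_def adjacency_matrix_def E_def johnson_adj_def by (auto simp: Int_commute)
  have re: "\<forall>x y. cnj (M x y) = M x y" unfolding M_def adjacency_matrix_def by simp
  have bd: "\<forall>x y. norm (M x y) \<le> 1" unfolding M_def adjacency_matrix_def by simp
  have inv: "\<forall>x\<in>V. \<forall>y\<in>V. M (\<sigma> x) (\<sigma> y) = M x y"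
    unfolding M_def adjacency_matrix_def using Einv by simp
  have "cmod (\<Sum>m. tterm V M \<tau> A B m) \<noteq> 1"
    using no_pst_orbit[OF finV AV BV sV[OF BV] sB[symmetric] sym re bd bij inv sA refl] .
  then show False using pst tm by simp
qed

end
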